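(* Suppose we have $2$ agents with additive, identical, normalized valuations, provided with a $2$-value prediction of accuracy $\eta<1-\frac{1-a}{2}$ for some given $a\in(\sqrt3-1,1]$; that is, the allowed error between the prediction and the true valuation is $1-\eta>\frac{1-a}{2}$. Then there is no online algorithm that guarantees an $a$-EFX allocation for all instances with error at most $1-\eta$, even when $T'=T=4$.
   Context: Online fair division with predictions and identical valuations: goods $g_1,\dots,g_T$ arrive one per time step; both agents share a true additive normalized valuation $v$ ($v(g_t)\ge0$, $\sum_{t\in[T]}v(g_t)=1$, $v(S)=\sum_{g\in S}v(g)$), and before any arrival the algorithm receives a prediction $p=(p(g_1),\dots,p(g_{T'}))$ (an additive normalized valuation over $T'$ predicted goods) and the accuracy level. A $2$-value prediction takes at most $2$ distinct values. Error $\frac12\sum_{t=1}^{\max\{T,T'\}}|p(g_t)-v(g_t)|$ (missing entries set to $0$); accuracy $\eta$ means the error is at most $1-\eta$. At time $t$, $v(g_t)$ is revealed and $g_t$ must be irrevocably allocated. For $S\ne\emptyset$, $\bar S=S\setminus\{g\}$ with $g\in\arg\max_{g'\in S}v(S\setminus\{g'\})$, $\bar\emptyset=\emptyset$. An allocation is $a$-EFX if $v(A_i)\ge a\cdot v(\bar A_j)$ for all $i,j$. *)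

theory Defs
  imports Complex_Main
begin

text \<open>Goods are indexed 0,...,T-1; a valuation over T goods is a real list of length T.\<close>

definition normalized_val :: "nat \<Rightarrow> real list \<Rightarrow> bool" where
  "normalized_val T v \<longleftrightarrow> length v = T \<and> (\<forall>x\<in>set v. 0 \<le> x) \<and> sum_list v = 1"

definition k_value :: "nat \<Rightarrow> real list \<Rightarrow> bool" where
  "k_value k p \<longleftrightarrow> card (set p) \<le> k"

text \<open>Prediction error; missing entries are treated as 0.\<close>
definition pred_error :: "real list \<Rightarrow> real list \<Rightarrow> real" where
  "pred_error p v = (1/2) * (\<Sum>t<max (length p) (length v).
      \<bar>(if t < length p then p ! t else 0) - (if t < length v then v ! t else 0)\<bar>)"

definition setval :: "real list \<Rightarrow> nat set \<Rightarrow> real" where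
  "setval v S = (\<Sum>g\<in>S. v ! g)"

definition barval :: "real list \<Rightarrow> nat set \<Rightarrow> real" where
  "barval v S = (if S = {} then 0 else Max ((\<lambda>g. setval v (S - {g})) ` S))"

definition a_EFX :: "real \<Rightarrow> real list \<Rightarrow> (nat \<Rightarrow> nat set) \<Rightarrow> bool" where
  "a_EFX a v A \<longleftrightarrow> (\<forall>i\<in>{0,1::nat}. \<forall>j\<in>{0,1::nat}. setval v (A i) \<ge> a * barval v (A j))"

text \<open>A deterministic online algorithm receives the prediction p and the list of values
  revealed so far [v(g_1),...,v(g_t)], and returns True iff g_t is given to agent 0.
  Since it is deterministic, its earlier decisions are functions of the earlier prefixes.\<close>
definition online_alloc :: "(real list \<Rightarrow> real list \<Rightarrow> bool) \<Rightarrow> real list \<Rightarrow> real list \<Rightarrow> nat \<Rightarrow> nat set" where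
  "online_alloc alg p v i =
     (if i = 0 then {t. t < length v \<and> alg p (take (Suc t) v)}
      else {t. t < length v \<and> \<not> alg p (take (Suc t) v)})"

end

theory Submission
  imports Defs
begin

definition fails :: "real \<Rightarrow> real list \<Rightarrow> nat set \<Rightarrow> nat set \<Rightarrow> bool" where
  "fails a v X Y \<longleftrightarrow> setval v X < a * barval v Y"

lemma fails_intro:
  assumes "finite Y" "g \<in> Y" "0 \<le> a" "setval v X < a * setval v (Y - {g})"
  shows "fails a v X Y"
proof -
  have "setval v (Y - {g}) \<le> barval v Y"
    using assms(1,2) unfolding barval_def by (auto intro!: Max_ge)
  hence "a * setval v (Y - {g}) \<le> a * barval v Y" using assms(3) by (simp add: mult_left_mono)
  thus ?thesis using assms(4) unfolding fails_def by linarith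
qed

lemma fails_not_EFX:
  assumes "fails a v (A 0) (A 1) \<or> fails a v (A 1) (A 0)"
  shows "\<not> a_EFX a v A"
  using assms unfolding fails_def a_EFX_def by force

lemma set4: "{t. t < (4::nat) \<and> P t} =
  (if P 0 then {0} else {}) \<union> (if P 1 then {1} else {}) \<union> (if P 2 then {2} else {}) \<union> (if P 3 then {3} else {})"
proof (rule set_eqI)
  fix t :: nat
  have "t < 4 \<longleftrightarrow> t = 0 \<or> t = 1 \<or> t = 2 \<or> t = 3" by auto
  then show "t \<in> {t. t < 4 \<and> P t} \<longleftrightarrow> t \<in> (if P 0 then {0} else {}) \<union> (if P 1 then {1} else {}) \<union> (if P 2 then {2} else {}) \<union> (if P 3 then {3} else {})"
    by (cases "P 0"; cases "P 1"; cases "P 2"; cases "P 3") auto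
qed

definition V1 :: "real \<Rightarrow> real \<Rightarrow> real list" where
  "V1 b e = [1/5 - (45/100*b + 3/4*e), 1/5, 1/5 + (45/100*b + 3/4*e) + (b/20 + e/4), 2/5 - (b/20 + e/4)]"
definition V2 :: "real \<Rightarrow> real \<Rightarrow> real list" where
  "V2 b e = [1/5 - (45/100*b + 3/4*e), 1/5, 1/5 - (b/20 + e/4), 2/5 + (45/100*b + 3/4*e) + (b/20 + e/4)]"

context
  fixes b e :: real
  assumes b0: "0 \<le> b" and b1: "b < 3/10" and e0: "0 < e" and e1: "e \<le> 1/1000"
begin

lemma prods: "0 \<le> b*b" "0 \<le> b*e" "b*b \<le> 3/10*b" "b*e \<le> 3/10*e"
  using b0 b1 e0 mult_right_mono[of b "3/10" b] mult_right_mono[of b "3/10" e] by auto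

lemma a0: "0 \<le> 1 - b" using b1 by simp

lemma l100: "fails (1-b) (V1 b e) {0,1} {2,3}"
  apply (rule fails_intro[where g=2]) apply simp apply simp apply (rule a0)
  apply (simp add: setval_def V1_def field_simps)
  apply (simp only: mult.assoc[symmetric])
  using b0 b1 e0 e1 prods by linarith
lemma l101: "fails (1-b) (V1 b e) {2} {0,1,3}"
  apply (rule fails_intro[where g=0]) apply simp apply simp apply (rule a0)
  apply (simp add: setval_def V1_def field_simps)
  apply (simp only: mult.assoc[symmetric])
  using b0 b1 e0 e1 prods by linarith
lemma l110: "fails (1-b) (V1 b e) {3} {0,1,2}"
  apply (rule fails_intro[where g=0]) apply simp apply simp apply (rule a0)
  apply (simp add: setval_def V1_def field_simps)
  apply (simp only: mult.assoc[symmetric])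
  using b0 b1 e0 e1 prods by linarith
lemma l111: "fails (1-b) (V1 b e) {} {0,1,2,3}"
  apply (rule fails_intro[where g=0]) apply simp apply simp apply (rule a0)
  apply (simp add: setval_def V1_def field_simps)
  apply (simp only: mult.assoc[symmetric])
  using b0 b1 e0 e1 prods by linarith
lemma l200: "fails (1-b) (V2 b e) {0} {1,2,3}"
  apply (rule fails_intro[where g=1]) apply simp apply simp apply (rule a0)
  apply (simp add: setval_def V2_def field_simps)
  apply (simp only: mult.assoc[symmetric])
  using b0 b1 e0 e1 prods by linarith
lemma l201: "fails (1-b) (V2 b e) {1,2} {0,3}"
  apply (rule fails_intro[where g=0]) apply simp apply simp apply (rule a0)
  apply (simp add: setval_def V2_def field_simps)
  apply (simp only: mult.assoc[symmetric])
  using b0 b1 e0 e1 prods by linarith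
lemma l210: "fails (1-b) (V2 b e) {0,2} {1,3}"
  apply (rule fails_intro[where g=1]) apply simp apply simp apply (rule a0)
  apply (simp add: setval_def V2_def field_simps)
  apply (simp only: mult.assoc[symmetric])
  using b0 b1 e0 e1 prods by linarith
lemma l211: "fails (1-b) (V2 b e) {1} {0,2,3}"
  apply (rule fails_intro[where g=0]) apply simp apply simp apply (rule a0)
  apply (simp add: setval_def V2_def field_simps)
  apply (simp only: mult.assoc[symmetric])
  using b0 b1 e0 e1 prods by linarith

lemma leaf1:
  assumes "c 0 = c 1"
  shows "fails (1-b) (V1 b e) {t. t<4 \<and> c t} {t. t<4 \<and> \<not> c t} \<or> fails (1-b) (V1 b e) {t. t<4 \<and> \<not> c t} {t. t<4 \<and> c t}"
  using assms l100 l101 l110 l111 by (cases "c 1"; cases "c 2"; cases "c 3") (simp_all add: set4 insert_commute)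

lemma leaf2:
  assumes "c 0 \<noteq> c 1"
  shows "fails (1-b) (V2 b e) {t. t<4 \<and> c t} {t. t<4 \<and> \<not> c t} \<or> fails (1-b) (V2 b e) {t. t<4 \<and> \<not> c t} {t. t<4 \<and> c t}"
  using assms l200 l201 l210 l211 by (cases "c 1"; cases "c 2"; cases "c 3") (simp_all add: set4 insert_commute)

end

lemma V_props:
  fixes b e :: real
  assumes b0: "0 \<le> b" and b1: "b < 3/10" and e0: "0 < e" and e1: "e \<le> 1/1000"
  shows "normalized_val 4 (V1 b e)" "normalized_val 4 (V2 b e)"
    "pred_error [1/5,1/5,1/5,2/5] (V1 b e) = b/2 + e"
    "pred_error [1/5,1/5,1/5,2/5] (V2 b e) = b/2 + e"
    "take (Suc 0) (V1 b e) = [1/5 - (45/100*b + 3/4*e)]" "take (Suc (Suc 0)) (V1 b e) = [1/5 - (45/100*b + 3/4*e), 1/5]"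
    "take (Suc 0) (V2 b e) = [1/5 - (45/100*b + 3/4*e)]" "take (Suc (Suc 0)) (V2 b e) = [1/5 - (45/100*b + 3/4*e), 1/5]"
    "length (V1 b e) = 4" "length (V2 b e) = 4"
proof -
  have s4: "{..<4::nat} = {0,1,2,3}" by auto
  show "normalized_val 4 (V1 b e)" "normalized_val 4 (V2 b e)"
    using assms by (auto simp: normalized_val_def V1_def V2_def)
  show "pred_error [1/5,1/5,1/5,2/5] (V1 b e) = b/2 + e"
    "pred_error [1/5,1/5,1/5,2/5] (V2 b e) = b/2 + e"
    using assms by (auto simp: pred_error_def V1_def V2_def s4 abs_if)
qed (simp_all add: V1_def V2_def numeral_eq_Suc)

theorem theorem4p16:
  fixes a \<eta> :: real
  assumes "sqrt 3 - 1 < a" and "a \<le> 1"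
    and "\<eta> < 1 - (1 - a) / 2"
  shows "\<forall>alg :: real list \<Rightarrow> real list \<Rightarrow> bool.
           \<exists>p v. normalized_val 4 p \<and> k_value 2 p \<and> normalized_val 4 v
             \<and> pred_error p v \<le> 1 - \<eta>
             \<and> \<not> a_EFX a v (online_alloc alg p v)"
proof
  fix alg :: "real list \<Rightarrow> real list \<Rightarrow> bool"
  define b where "b = 1 - a"
  have "(17/10::real) \<le> sqrt 3" by (rule real_le_rsqrt) (simp add: power2_eq_square)
  hence b0: "0 \<le> b" and b1: "b < 3/10" using assms unfolding b_def by auto
  define e where "e = min (1/1000) (1 - \<eta> - b/2)"
  have "0 < 1 - \<eta> - b/2" using assms(3) unfolding b_def by linarith
  hence e0: "0 < e" unfolding e_def by simp
  have e1: "e \<le> 1/1000" unfolding e_def by (rule min.cobounded1)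
  have "e \<le> 1 - \<eta> - b/2" unfolding e_def by (rule min.cobounded2)
  hence e2: "b/2 + e \<le> 1 - \<eta>" by linarith
  have a_eq: "a = 1 - b" unfolding b_def by simp
  define p :: "real list" where "p = [1/5,1/5,1/5,2/5]"
  define x where "x = 1/5 - (45/100*b + 3/4*e)"
  define v where "v = (if alg p [x] = alg p [x, 1/5] then V1 b e else V2 b e)"
  define c where "c t = alg p (take (Suc t) v)" for t
  note VP = V_props[OF b0 b1 e0 e1]
  have len: "length v = 4" unfolding v_def using VP by simp
  have c0: "c 0 = alg p [x]" and c1: "c 1 = alg p [x, 1/5]"
    unfolding c_def v_def x_def using VP by simp_all
  have A0: "online_alloc alg p v 0 = {t. t<4 \<and> c t}" and A1: "online_alloc alg p v 1 = {t. t<4 \<and> \<not> c t}"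
    unfolding online_alloc_def c_def len by simp_all
  have F: "fails a v (online_alloc alg p v 0) (online_alloc alg p v 1) \<or> fails a v (online_alloc alg p v 1) (online_alloc alg p v 0)"
  proof (cases "alg p [x] = alg p [x, 1/5]")
    case True
    then show ?thesis unfolding A0 A1 a_eq using leaf1[OF b0 b1 e0 e1, of c] c0 c1 by (simp add: v_def)
  next
    case False
    then show ?thesis unfolding A0 A1 a_eq using leaf2[OF b0 b1 e0 e1, of c] c0 c1 by (simp add: v_def)
  qed
  have nv: "normalized_val 4 v" and pe: "pred_error p v \<le> 1 - \<eta>"
    unfolding v_def p_def using VP e2 by auto
  have np: "normalized_val 4 p" unfolding p_def normalized_val_def by simp
  have kp: "k_value 2 p" unfolding p_def k_value_def by simp
  show "\<exists>p v. normalized_val 4 p \<and> k_value 2 p \<and> normalized_val 4 v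
             \<and> pred_error p v \<le> 1 - \<eta>
             \<and> \<not> a_EFX a v (online_alloc alg p v)"
    using np kp nv pe fails_not_EFX[OF F] by blast
qed

end
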